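(* Given a quantum state $\rho$ and a list of observables $(X_{1},\dots,X_{d})$ on a finite dimensional Hilbert space $\mathcal{H}$, let $A$ and $J$ be the $d\times d$ nonnegative matrices whose $(i,j)$th entries are $A_{ij}=\mathrm{Tr}\,\sqrt{\rho}X_{j}\sqrt{\rho}X_{i}$ and $J_{ij}=\mathrm{Tr}\,\rho X_{j}X_{i}$. Then both $A$ and $J\#J^{\top}$ are real matrices and satisfy \[ A\leq J\#J^{\top}, \] where $\#$ denotes the operator geometric mean.
   Context: Here $\mathcal{H}$ is a finite dimensional complex Hilbert space, a quantum state is a density operator $\rho\ge 0$ with $\mathrm{Tr}\,\rho=1$, and observables are selfadjoint operators on $\mathcal{H}$. For positive semidefinite matrices $P,Q$, the operator geometric mean $P\#Q$ (Kubo–Ando) can be characterized as $P\#Q=\max\left\{ X\geq0 : \begin{pmatrix}P & X \\ X & Q \end{pmatrix} \geq 0 \right\}$. $J^{\top}$ denotes the transpose of $J$ (equivalently its complex conjugate, since $J$ is Hermitian). *)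

theory Defs
  imports "HOL-Analysis.Analysis"
begin

definition adjoint_mat :: "complex^'n^'m \<Rightarrow> complex^'m^'n" where
  "adjoint_mat A = (\<chi> i j. cnj (A $ j $ i))"

definition hermitian_mat :: "complex^'n^'n \<Rightarrow> bool" where
  "hermitian_mat A \<longleftrightarrow> adjoint_mat A = A"

definition psd :: "complex^'n^'n \<Rightarrow> bool" where
  "psd A \<longleftrightarrow> hermitian_mat A \<and>
     (\<forall>v::complex^'n. Im (\<Sum>i\<in>UNIV. cnj (v $ i) * (A *v v) $ i) = 0 \<and>
                       0 \<le> Re (\<Sum>i\<in>UNIV. cnj (v $ i) * (A *v v) $ i))"

definition loewner_le :: "complex^'n^'n \<Rightarrow> complex^'n^'n \<Rightarrow> bool" where
  "loewner_le A B \<longleftrightarrow> psd (B - A)"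

definition mat_sqrt :: "complex^'n^'n \<Rightarrow> complex^'n^'n" where
  "mat_sqrt A = (THE B. psd B \<and> B ** B = A)"

definition density_op :: "complex^'n^'n \<Rightarrow> bool" where
  "density_op \<rho> \<longleftrightarrow> psd \<rho> \<and> trace \<rho> = 1"

definition block2 :: "complex^'d^'d \<Rightarrow> complex^'d^'d \<Rightarrow> complex^'d^'d \<Rightarrow> complex^'d^'d
    \<Rightarrow> complex^('d + 'd)^('d + 'd)" where
  "block2 P X Y Q = (\<chi> i j. case (i, j) of
      (Inl a, Inl b) \<Rightarrow> P $ a $ b
    | (Inl a, Inr b) \<Rightarrow> X $ a $ b
    | (Inr a, Inl b) \<Rightarrow> Y $ a $ b
    | (Inr a, Inr b) \<Rightarrow> Q $ a $ b)"

text \<open>Kubo-Ando geometric mean via its maximal characterisation: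
  the Loewner-maximum of {X >= 0 : [[P, X],[X, Q]] >= 0}.\<close>
definition geo_mean :: "complex^'d^'d \<Rightarrow> complex^'d^'d \<Rightarrow> complex^'d^'d" (infixl "#" 70) where
  "geo_mean P Q = (THE X. psd X \<and> psd (block2 P X X Q) \<and>
       (\<forall>Y. psd Y \<and> psd (block2 P Y Y Q) \<longrightarrow> loewner_le Y X))"

definition real_mat :: "complex^'d^'d \<Rightarrow> bool" where
  "real_mat A \<longleftrightarrow> (\<forall>i j. Im (A $ i $ j) = 0)"

end

theory Submission
  imports Defs
begin


definition cinner :: "complex^'n \<Rightarrow> complex^'n \<Rightarrow> complex" where
  "cinner v w = (\<Sum>i\<in>UNIV. cnj (v$i) * w$i)"

lemma cinner_cnj: "cnj (cinner v w) = cinner w v"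
  by (simp add: cinner_def mult.commute)

lemma cinner_add_right: "cinner v (w1 + w2) = cinner v w1 + cinner v w2"
  by (simp add: cinner_def algebra_simps sum.distrib)
lemma cinner_add_left: "cinner (w1 + w2) v = cinner w1 v + cinner w2 v"
  by (simp add: cinner_def algebra_simps sum.distrib)
lemma cinner_diff_right: "cinner v (w1 - w2) = cinner v w1 - cinner v w2"
  by (simp add: cinner_def algebra_simps sum_subtractf)
lemma cinner_diff_left: "cinner (w1 - w2) v = cinner w1 v - cinner w2 v"
  by (simp add: cinner_def algebra_simps sum_subtractf)
lemma cinner_scale_right: "cinner v (c *s w) = c * cinner v w"
  by (simp add: cinner_def algebra_simps sum_distrib_left)
lemma cinner_scale_left: "cinner (c *s v) w = cnj c * cinner v w"
  by (simp add: cinner_def algebra_simps sum_distrib_left)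
lemma cinner_zero_right[simp]: "cinner v 0 = 0" by (simp add: cinner_def)
lemma cinner_zero_left[simp]: "cinner 0 v = 0" by (simp add: cinner_def)

lemma cnj_mult_self: "cnj z * z = complex_of_real ((cmod z)^2)"
  by (metis complex_norm_square mult.commute of_real_power)

lemma cinner_self: "cinner v v = of_real (\<Sum>i\<in>UNIV. (cmod (v$i))^2)"
  unfolding cinner_def cnj_mult_self of_real_sum ..

lemma cinner_self_ge0: "0 \<le> Re (cinner v v)" "Im (cinner v v) = 0"
  by (auto simp: cinner_self intro: sum_nonneg)

lemma cinner_self_eq0: "cinner v v = 0 \<longleftrightarrow> v = 0"
proof
  assume "cinner v v = 0"
  then have "(\<Sum>i\<in>UNIV. (cmod (v$i))^2) = 0" unfolding cinner_self of_real_eq_0_iff .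
  then have "\<forall>i\<in>UNIV. (cmod (v$i))^2 = 0" by (subst (asm) sum_nonneg_eq_0_iff) auto
  then show "v = 0" by (simp add: vec_eq_iff)
qed simp

lemma cinner_adj: "cinner (A *v v) w = cinner v (adjoint_mat A *v w)"
proof -
  have "cinner (A *v v) w = (\<Sum>i\<in>UNIV. \<Sum>j\<in>UNIV. cnj (A$i$j) * cnj (v$j) * w$i)"
    unfolding cinner_def matrix_vector_mult_def by (simp add: sum_distrib_right)
  also have "\<dots> = (\<Sum>j\<in>UNIV. \<Sum>i\<in>UNIV. cnj (A$i$j) * cnj (v$j) * w$i)"
    by (rule sum.swap)
  also have "\<dots> = cinner v (adjoint_mat A *v w)"
    unfolding cinner_def matrix_vector_mult_def adjoint_mat_def
    by (simp add: sum_distrib_left mult.assoc mult.left_commute)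
  finally show ?thesis .
qed

lemma hermitian_adj: "hermitian_mat H \<Longrightarrow> cinner (H *v v) w = cinner v (H *v w)"
  by (simp add: cinner_adj hermitian_mat_def)

lemma herm_qf_real: "hermitian_mat H \<Longrightarrow> Im (cinner v (H *v v)) = 0"
proof -
  assume h: "hermitian_mat H"
  have "cnj (cinner v (H *v v)) = cinner v (H *v v)"
    by (simp add: cinner_cnj hermitian_adj[OF h])
  then have "Im (cnj (cinner v (H *v v))) = Im (cinner v (H *v v))" by simp
  then show ?thesis by simp
qed

lemma qf_eq: "(\<Sum>i\<in>UNIV. cnj (v $ i) * (A *v v) $ i) = cinner v (A *v v)"
  by (simp add: cinner_def)

lemma psd_iff: "psd A \<longleftrightarrow> hermitian_mat A \<and> (\<forall>v. 0 \<le> Re (cinner v (A *v v)))"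
  unfolding psd_def qf_eq using herm_qf_real by blast

lemma psd_herm: "psd A \<Longrightarrow> hermitian_mat A" by (simp add: psd_iff)
lemma psd_qf: "psd A \<Longrightarrow> 0 \<le> Re (cinner v (A *v v))" by (simp add: psd_iff)



definition csc :: "complex \<Rightarrow> complex^'n^'m \<Rightarrow> complex^'n^'m" where
  "csc c M = (\<chi> i j. c * M$i$j)"

definition outer :: "complex^'n \<Rightarrow> complex^'n \<Rightarrow> complex^'n^'n" where
  "outer a b = (\<chi> i j. a$i * cnj (b$j))"

lemma mv_scale: "A *v (c *s v) = c *s (A *v (v::complex^'n))"
  by (simp add: vec_eq_iff matrix_vector_mult_def sum_distrib_left algebra_simps)

lemma mv_add: "A *v (v + w) = A *v v + A *v (w::complex^'n)"
  by (simp add: vec_eq_iff matrix_vector_mult_def sum.distrib algebra_simps)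

lemma mv_diff: "A *v (v - w) = A *v v - A *v (w::complex^'n)"
  by (simp add: vec_eq_iff matrix_vector_mult_def sum_subtractf algebra_simps)

lemma csc_mv: "csc c M *v v = c *s (M *v v)"
  by (simp add: vec_eq_iff matrix_vector_mult_def csc_def sum_distrib_left algebra_simps)

lemma outer_mv: "outer a b *v v = cinner b v *s a"
  by (simp add: vec_eq_iff matrix_vector_mult_def outer_def cinner_def sum_distrib_left algebra_simps)

lemma sum_mv: "(\<Sum>k\<in>S. F k) *v (v::complex^'n) = (\<Sum>k\<in>S. F k *v v)"
  by (induction S rule: infinite_finite_induct) (auto simp: matrix_vector_mult_add_rdistrib)

lemma mul_sum: "(M::complex^'n^'n) ** (\<Sum>k\<in>S. F k) = (\<Sum>k\<in>S. M ** F k)"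
  by (induction S rule: infinite_finite_induct) (auto simp: matrix_add_ldistrib)

lemma mul_outer: "M ** outer a b = outer (M *v a) b"
  by (simp add: vec_eq_iff matrix_matrix_mult_def matrix_vector_mult_def outer_def sum_distrib_left sum_distrib_right mult_ac)

lemma sum_scale_vec: "(\<Sum>k\<in>S. c k *s (v::complex^'n)) = (\<Sum>k\<in>S. c k) *s v"
  by (simp add: vec_eq_iff sum_distrib_right)

lemma cinner_axis: "cinner b (axis j 1) = cnj (b$j)"
  by (simp add: cinner_def axis_def if_distrib cong: if_cong)

lemma trace_outer: "trace (outer b b) = cinner b b"
  by (simp add: trace_def outer_def cinner_def mult.commute)

lemma trace_sum: "trace (\<Sum>k\<in>S. F k) = (\<Sum>k\<in>S. trace (F k :: complex^'n^'n))"
  by (induction S rule: infinite_finite_induct) (auto simp: trace_add trace_0[simplified mat_0])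

definition orthon :: "(complex^'n) set \<Rightarrow> bool" where
  "orthon B \<longleftrightarrow> (\<forall>b\<in>B. \<forall>c\<in>B. cinner b c = (if b = c then 1 else 0))"

lemma perp_exists:
  fixes B :: "(complex^'n) set"
  assumes "finite B" "orthon B" "card B < CARD('n)"
  shows "\<exists>v. v \<noteq> 0 \<and> (\<forall>b\<in>B. cinner b v = 0)"
proof (rule ccontr)
  assume no: "\<not> ?thesis"
  define p where "p e = e - (\<Sum>b\<in>B. cinner b e *s b)" for e :: "complex^'n"
  have perp: "cinner c (p e) = 0" if "c \<in> B" for c e
  proof -
    have "cinner c (\<Sum>b\<in>B. cinner b e *s b) = (\<Sum>i\<in>UNIV. \<Sum>b\<in>B. cnj (c$i) * (cinner b e * b$i))"
      by (simp add: cinner_def sum_distrib_left)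
    also have "\<dots> = (\<Sum>b\<in>B. \<Sum>i\<in>UNIV. cnj (c$i) * (cinner b e * b$i))"
      by (rule sum.swap)
    also have "\<dots> = (\<Sum>b\<in>B. cinner b e * cinner c b)"
      apply (simp add: cinner_def sum_distrib_left sum_distrib_right algebra_simps)
      apply (rule sum.cong[OF refl])
      apply (rule sum.swap)
      done
    also have "\<dots> = (\<Sum>b\<in>B. if b = c then cinner b e else 0)"
      using assms(2) that unfolding orthon_def by (intro sum.cong) auto
    also have "\<dots> = cinner c e" using that assms(1) by simp
    finally show ?thesis unfolding p_def cinner_diff_right by simp
  qed
  have p0: "p e = 0" for e using no perp by blast
  have I: "mat 1 = (\<Sum>b\<in>B. outer b b)"
  proof (rule vec_eq_iff[THEN iffD2, rule_format], rule vec_eq_iff[THEN iffD2, rule_format])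
    fix i j
    have "axis j 1 = (\<Sum>b\<in>B. cinner b (axis j 1) *s b)" using p0[of "axis j 1"] by (simp add: p_def)
    then have "(axis j (1::complex)) $ i = (\<Sum>b\<in>B. cinner b (axis j 1) *s b) $ i" by simp
    then have "(axis j (1::complex)) $ i = (\<Sum>b\<in>B. cnj (b$j) * b$i)" unfolding cinner_axis by simp
    then show "mat 1 $ i $ j = (\<Sum>b\<in>B. outer b b) $ i $ j"
      by (simp add: cinner_axis outer_def mat_def axis_def mult.commute)
  qed
  have "of_nat CARD('n) = trace (mat 1 :: complex^'n^'n)" by (simp add: trace_I)
  also have "\<dots> = (\<Sum>b\<in>B. cinner b b)" unfolding I trace_sum trace_outer ..
  also have "\<dots> = of_nat (card B)" using assms(2) unfolding orthon_def by simp
  finally show False using assms(3) by simp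
qed



lemma scaleR_vec_nth: "(a *\<^sub>R (x::complex^'n)) $ i = of_real a * x $ i"
  by (simp only: vector_scaleR_component scaleR_conv_of_real[where 'a=complex])

lemma cinner_scaleR_left: "cinner (a *\<^sub>R x) y = of_real a * cinner x y"
  by (simp add: cinner_def sum_distrib_left algebra_simps scaleR_conv_of_real[where 'a=complex])
lemma cinner_scaleR_right: "cinner x (a *\<^sub>R y) = of_real a * cinner x y"
  by (simp add: cinner_def sum_distrib_left algebra_simps scaleR_conv_of_real[where 'a=complex])
lemma mv_scaleR: "A *v (a *\<^sub>R (x::complex^'n)) = a *\<^sub>R (A *v x)"
  by (simp add: vec_eq_iff matrix_vector_mult_def sum_distrib_left algebra_simps scaleR_conv_of_real[where 'a=complex])

lemma cinner_self_norm: "cinner v v = of_real ((norm v)^2)"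
proof -
  have "(norm v)^2 = (\<Sum>i\<in>UNIV. (cmod (v$i))^2)"
    unfolding norm_vec_def L2_set_def by (simp add: sum_nonneg)
  then show ?thesis by (simp add: cinner_self)
qed

lemma cont_cinner: "continuous_on S (\<lambda>v. cinner b (v::complex^'n))"
  unfolding cinner_def by (intro continuous_intros)

lemma qf_expand: "cinner v (A *v v) = (\<Sum>i\<in>UNIV. \<Sum>j\<in>UNIV. cnj (v$i) * A$i$j * v$j)"
  by (simp add: cinner_def matrix_vector_mult_def sum_distrib_left mult.assoc)

lemma cont_qf: "continuous_on S (\<lambda>v. Re (cinner v (A *v (v::complex^'n))))"
  unfolding qf_expand by (intro continuous_intros)

lemma eig_in_perp:
  fixes H :: "complex^'n^'n" and B :: "(complex^'n) set"
  assumes herm: "hermitian_mat H" and fin: "finite B" and on: "orthon B"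
    and eig: "\<forall>b\<in>B. \<exists>\<mu>::real. H *v b = \<mu> *\<^sub>R b" and card: "card B < CARD('n)"
  shows "\<exists>v. cinner v v = 1 \<and> (\<forall>b\<in>B. cinner b v = 0) \<and> (\<exists>l::real. H *v v = l *\<^sub>R v)"
proof -
  define W where "W = {v::complex^'n. \<forall>b\<in>B. cinner b v = 0}"
  define K where "K = W \<inter> sphere 0 1"
  define f where "f v = Re (cinner v (H *v v))" for v
  have W_add: "x + y \<in> W" if "x \<in> W" "y \<in> W" for x y
    using that by (simp add: W_def cinner_add_right)
  have W_scale: "a *\<^sub>R x \<in> W" if "x \<in> W" for x a
    using that by (simp add: W_def cinner_scaleR_right)
  have f_scale: "f (a *\<^sub>R x) = a^2 * f x" for a x
    by (simp add: f_def mv_scaleR cinner_scaleR_left cinner_scaleR_right power2_eq_square)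
  have "closed W"
  proof -
    have "W = (\<Inter>b\<in>B. {v. cinner b v = 0})" by (auto simp: W_def)
    moreover have "closed {v. cinner b v = 0}" for b
      using continuous_closed_preimage_constant[OF cont_cinner[of UNIV b] closed_UNIV, of 0]
      by (simp add: vimage_def Collect_conj_eq)
    ultimately show ?thesis by auto
  qed
  then have "compact K" unfolding K_def by (intro closed_Int_compact compact_sphere)
  obtain v0 where v0: "v0 \<noteq> 0" "\<forall>b\<in>B. cinner b v0 = 0" using perp_exists[OF fin on card] by blast
  have "(1 / norm v0) *\<^sub>R v0 \<in> K" using v0 W_scale[of v0] by (auto simp: K_def W_def)
  then have "K \<noteq> {}" by auto
  obtain v where vK: "v \<in> K" and vmax: "\<forall>y\<in>K. f y \<le> f v"
    using continuous_attains_sup[OF \<open>compact K\<close> \<open>K \<noteq> {}\<close> cont_qf[of K H]] unfolding f_def by blast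
  have vW: "v \<in> W" and vn: "norm v = 1" using vK by (auto simp: K_def)
  have vv: "cinner v v = 1" using vn by (simp add: cinner_self_norm)
  have fW: "f y \<le> f v * (norm y)^2" if "y \<in> W" for y
  proof (cases "y = 0")
    case True then show ?thesis by (simp add: f_def)
  next
    case False
    then have "(1 / norm y) *\<^sub>R y \<in> K" using W_scale[OF that] by (auto simp: K_def)
    then have "f ((1 / norm y) *\<^sub>R y) \<le> f v" using vmax by blast
    then have "f y / (norm y)^2 \<le> f v" unfolding f_scale by (simp add: power_divide)
    then show ?thesis using False by (simp add: divide_le_eq mult.commute)
  qed
  define l where "l = f v"
  have Hv: "cinner v (H *v v) = of_real l"
    using herm_qf_real[OF herm, of v] unfolding l_def f_def by (simp add: complex_eq_iff)
  define r where "r = H *v v - l *\<^sub>R v"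
  have rW0: "\<forall>b\<in>B. cinner b r = 0"
    unfolding r_def
  proof
    fix b assume b: "b \<in> B"
    then obtain \<mu> where mu: "H *v b = \<mu> *\<^sub>R b" using eig by blast
    have "cinner b (H *v v) = cinner (H *v b) v" using hermitian_adj[OF herm] by simp
    also have "\<dots> = 0" using vW b by (simp add: mu cinner_scaleR_left W_def)
    finally show "cinner b (H *v v - l *\<^sub>R v) = 0"
      using vW b by (simp add: cinner_diff_right cinner_scaleR_right W_def)
  qed
  have rW: "r \<in> W" using rW0 by (simp add: W_def)
  have vr: "cinner v r = 0" unfolding r_def cinner_diff_right cinner_scaleR_right Hv vv by simp
  have rv: "cinner r v = 0" using vr cinner_cnj[of v r] by simp
  have Hv': "H *v v = r + l *\<^sub>R v" by (simp add: r_def)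
  have rHv: "cinner r (H *v v) = cinner r r"
    unfolding Hv' cinner_add_right cinner_scaleR_right rv by simp
  have vHr: "cinner v (H *v r) = cinner r r"
    using hermitian_adj[OF herm, of v r] unfolding Hv' cinner_add_left cinner_scaleR_left vr by simp
  define n where "n = Re (cinner r r)"
  have rr: "cinner r r = of_real n" using cinner_self_ge0[of r] by (simp add: n_def complex_eq_iff)
  have key: "2 * n \<le> t * (l * n - f r)" if "t > 0" for t
  proof -
    define y where "y = v + t *\<^sub>R r"
    have "y \<in> W" unfolding y_def by (intro W_add W_scale vW rW)
    then have le: "f y \<le> f v * (norm y)^2" by (rule fW)
    have "cinner y (H *v y) = cinner v (H *v v) + of_real t * cinner v (H *v r)
        + of_real t * cinner r (H *v v) + of_real t * of_real t * cinner r (H *v r)"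
      unfolding y_def mv_add mv_scaleR cinner_add_left cinner_add_right cinner_scaleR_left
        cinner_scaleR_right by (simp add: algebra_simps)
    then have fy: "f y = l + 2 * t * n + t^2 * f r"
      unfolding f_def[of y] using Hv vHr rHv rr by (simp add: f_def power2_eq_square algebra_simps)
    have "cinner y y = 1 + of_real t * of_real t * cinner r r"
      unfolding y_def cinner_add_left cinner_add_right cinner_scaleR_left cinner_scaleR_right
      using vv vr rv by (simp add: algebra_simps)
    then have "cinner y y = complex_of_real (1 + t^2 * n)"
      unfolding rr by (simp add: power2_eq_square)
    then have "complex_of_real ((norm y)^2) = complex_of_real (1 + t^2 * n)"
      by (simp only: cinner_self_norm)
    then have "(norm y)^2 = 1 + t^2 * n" by (simp only: of_real_eq_iff)
    with le fy have "l + 2 * t * n + t^2 * f r \<le> l * (1 + t^2 * n)" by (simp add: l_def)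
    then have "t * (2 * n) \<le> t * (t * (l * n - f r))" by (simp add: algebra_simps power2_eq_square)
    with that show ?thesis by simp
  qed
  have n0: "n = 0"
  proof (rule ccontr)
    assume "n \<noteq> 0"
    then have npos: "n > 0" using cinner_self_ge0[of r] by (simp add: n_def)
    define c where "c = l * n - f r"
    define t where "t = n / (\<bar>c\<bar> + 1)"
    have tpos: "t > 0" using npos by (simp add: t_def add_pos_nonneg)
    have "t * c \<le> t * \<bar>c\<bar>" using tpos by (simp add: mult_left_mono)
    also have "\<dots> < t * (\<bar>c\<bar> + 1)" using tpos by simp
    also have "\<dots> = n" by (simp add: t_def)
    finally have "t * c < n" .
    with key[OF tpos] npos show False by (simp add: c_def)
  qed
  then have "r = 0" using rr cinner_self_eq0[of r] by simp
  then have "H *v v = l *\<^sub>R v" by (simp add: r_def)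
  then show ?thesis using vv vW unfolding W_def by blast
qed



lemma eigsets:
  fixes H :: "complex^'n^'n"
  assumes herm: "hermitian_mat H"
  shows "k \<le> CARD('n) \<Longrightarrow> \<exists>B. finite B \<and> card B = k \<and> orthon B \<and> (\<forall>b\<in>B. \<exists>\<mu>::real. H *v b = \<mu> *\<^sub>R b)"
proof (induction k)
  case 0
  then show ?case by (intro exI[of _ "{}"]) (auto simp: orthon_def)
next
  case (Suc k)
  then obtain B where B: "finite B" "card B = k" "orthon B" "\<forall>b\<in>B. \<exists>\<mu>::real. H *v b = \<mu> *\<^sub>R b"
    by auto
  obtain v where v: "cinner v v = 1" "\<forall>b\<in>B. cinner b v = 0" "\<exists>l::real. H *v v = l *\<^sub>R v"
    using eig_in_perp[OF herm B(1,3,4)] B(2) Suc.prems by auto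
  have vB: "v \<notin> B" using v by force
  have vb: "cinner v b = 0" if "b \<in> B" for b using v(2) that cinner_cnj[of b v] by simp
  show ?case
  proof (intro exI[of _ "insert v B"] conjI)
    show "orthon (insert v B)"
      using B(3) v(1,2) vb vB unfolding orthon_def by auto
  qed (use B v vB in auto)
qed

definition onb :: "('n \<Rightarrow> complex^'n) \<Rightarrow> bool" where
  "onb u \<longleftrightarrow> (\<forall>k j. cinner (u k) (u j) = (if k = j then 1 else 0)) \<and> (\<Sum>k\<in>UNIV. outer (u k) (u k)) = mat 1"

lemma spectral:
  fixes H :: "complex^'n^'n"
  assumes herm: "hermitian_mat H"
  obtains u :: "'n \<Rightarrow> complex^'n" and l :: "'n \<Rightarrow> real"
  where "onb u" "\<And>k. H *v u k = l k *\<^sub>R u k"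
proof -
  obtain B where B: "finite B" "card B = CARD('n)" "orthon B" "\<forall>b\<in>B. \<exists>\<mu>::real. H *v b = \<mu> *\<^sub>R b"
    using eigsets[OF herm, of "CARD('n)"] by auto
  obtain g where g: "bij_betw g (UNIV::'n set) B"
    using finite_same_card_bij[of "UNIV::'n set" B] B(1,2) by auto
  have gB: "g k \<in> B" for k using g by (auto simp: bij_betw_def)
  have ginj: "g k = g j \<longleftrightarrow> k = j" for k j using g by (auto simp: bij_betw_def inj_on_def)
  have orth: "cinner (g k) (g j) = (if k = j then 1 else 0)" for k j
    using B(3) gB[of k] gB[of j] ginj[of k j] unfolding orthon_def by auto
  define l where "l k = (SOME \<mu>::real. H *v g k = \<mu> *\<^sub>R g k)" for k
  have eig: "H *v g k = l k *\<^sub>R g k" for k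
    unfolding l_def using B(4) gB[of k] by (metis (mono_tags, lifting) someI_ex)
  define U :: "complex^'n^'n" where "U = (\<chi> i k. g k $ i)"
  have ent: "(adjoint_mat U ** U) $ k $ j = cinner (g k) (g j)" for k j
    by (simp add: matrix_matrix_mult_def adjoint_mat_def U_def cinner_def)
  have "adjoint_mat U ** U = mat 1"
    unfolding vec_eq_iff ent orth by (simp add: mat_def)
  then have "U ** adjoint_mat U = mat 1" by (simp add: matrix_left_right_inverse)
  moreover have ent2: "(U ** adjoint_mat U) $ i $ j = (\<Sum>k\<in>UNIV. outer (g k) (g k)) $ i $ j" for i j
    by (simp add: matrix_matrix_mult_def adjoint_mat_def U_def outer_def)
  ultimately have "(\<Sum>k\<in>UNIV. outer (g k) (g k)) = mat 1"
    by (metis vec_eq_iff)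
  then have "onb g" using orth by (simp add: onb_def)
  then show ?thesis by (rule that) (rule eig)
qed

definition fc :: "('n \<Rightarrow> complex^'n) \<Rightarrow> ('n \<Rightarrow> real) \<Rightarrow> complex^'n^'n" where
  "fc u f = (\<Sum>k\<in>UNIV. csc (of_real (f k)) (outer (u k) (u k)))"

lemma onb_orth: "onb u \<Longrightarrow> cinner (u k) (u j) = (if k = j then 1 else 0)"
  by (simp add: onb_def)

lemma onb_expand: "onb u \<Longrightarrow> (M::complex^'n^'n) = (\<Sum>k\<in>UNIV. outer (M *v u k) (u k))"
proof -
  assume "onb u"
  then have "M = M ** (\<Sum>k\<in>UNIV. outer (u k) (u k))" by (simp add: onb_def)
  then show ?thesis by (simp add: mul_sum mul_outer)
qed

lemma onb_eq: "onb u \<Longrightarrow> (\<And>k. M *v u k = N *v u k) \<Longrightarrow> M = (N::complex^'n^'n)"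
proof -
  assume o: "onb u" and h: "\<And>k. M *v u k = N *v u k"
  have "M = (\<Sum>k\<in>UNIV. outer (M *v u k) (u k))" by (rule onb_expand[OF o])
  also have "\<dots> = (\<Sum>k\<in>UNIV. outer (N *v u k) (u k))" by (simp add: h)
  also have "\<dots> = N" by (rule onb_expand[OF o, symmetric])
  finally show ?thesis .
qed

lemma fc_mv: "onb u \<Longrightarrow> fc u f *v u j = f j *\<^sub>R u j"
proof -
  assume o: "onb u"
  have "fc u f *v u j = (\<Sum>k\<in>UNIV. (of_real (f k) * cinner (u k) (u j)) *s u k)"
    by (simp add: fc_def sum_mv csc_mv outer_mv)
  also have "\<dots> = (\<Sum>k\<in>UNIV. if k = j then of_real (f j) *s u j else 0)"
    using onb_orth[OF o] by (intro sum.cong) auto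
  also have "\<dots> = f j *\<^sub>R u j" by (simp add: vec_eq_iff scaleR_conv_of_real[where 'a=complex])
  finally show ?thesis .
qed

lemma fc_mult: "onb u \<Longrightarrow> fc u f ** fc u g = fc u (\<lambda>k. f k * g k)"
proof -
  assume o: "onb u"
  show ?thesis
  proof (rule onb_eq[OF o])
    fix k
    show "(fc u f ** fc u g) *v u k = fc u (\<lambda>k. f k * g k) *v u k"
      by (simp add: fc_mv[OF o] mv_scaleR flip: matrix_vector_mul_assoc)
  qed
qed

lemma fc_one: "onb u \<Longrightarrow> fc u (\<lambda>k. 1) = mat 1"
proof -
  assume o: "onb u"
  show ?thesis by (rule onb_eq[OF o]) (simp add: fc_mv[OF o])
qed

lemma fc_eig: "onb u \<Longrightarrow> (\<And>k. H *v u k = l k *\<^sub>R u k) \<Longrightarrow> H = fc u l"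
proof -
  assume o: "onb u" and e: "\<And>k. H *v u k = l k *\<^sub>R u k"
  show ?thesis by (rule onb_eq[OF o]) (simp add: fc_mv[OF o] e)
qed

lemma fc_entry: "fc u f $ i $ j = (\<Sum>k\<in>UNIV. of_real (f k) * (u k $ i * cnj (u k $ j)))"
  by (simp add: fc_def csc_def outer_def)

lemma fc_herm: "hermitian_mat (fc u f)"
  unfolding hermitian_mat_def adjoint_mat_def vec_eq_iff
  by (simp add: fc_entry cnj_sum mult.commute)

lemma fc_qf: "cinner v (fc u f *v v) = (\<Sum>k\<in>UNIV. complex_of_real (f k * (cmod (cinner v (u k)))^2))"
proof -
  have "cinner v (fc u f *v v) = (\<Sum>k\<in>UNIV. of_real (f k) * (cinner (u k) v * cinner v (u k)))"
    apply (simp add: fc_def sum_mv csc_mv outer_mv cinner_def sum_distrib_left vec_eq_iff mult_ac)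
    apply (rule sum.swap)
    done
  also have "\<dots> = (\<Sum>k\<in>UNIV. complex_of_real (f k * (cmod (cinner v (u k)))^2))"
  proof (intro sum.cong refl)
    fix k
    have "cinner (u k) v * cinner v (u k) = complex_of_real ((cmod (cinner v (u k)))^2)"
      using cnj_mult_self[of "cinner v (u k)"] cinner_cnj[of v "u k"] by simp
    then show "of_real (f k) * (cinner (u k) v * cinner v (u k)) = complex_of_real (f k * (cmod (cinner v (u k)))^2)"
      by simp
  qed
  finally show ?thesis .
qed

lemma fc_psd: "(\<And>k. 0 \<le> f k) \<Longrightarrow> psd (fc u f)"
proof -
  assume f: "\<And>k. 0 \<le> f k"
  have "0 \<le> Re (cinner v (fc u f *v v))" for v
  proof -
    have "Re (cinner v (fc u f *v v)) = (\<Sum>k\<in>UNIV. f k * (cmod (cinner v (u k)))^2)"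
      unfolding fc_qf Re_sum Re_complex_of_real ..
    also have "\<dots> \<ge> 0" by (rule sum_nonneg) (simp add: f)
    finally show ?thesis .
  qed
  then show ?thesis unfolding psd_iff using fc_herm by blast
qed



lemma cinner_minus_right: "cinner v (- w) = - cinner v w"
  by (simp add: cinner_def sum_negf)

lemma eig_qf: "onb u \<Longrightarrow> A *v u k = c *\<^sub>R u k \<Longrightarrow> cinner (u k) (A *v u k) = of_real c"
  by (simp add: cinner_scaleR_right onb_orth)

lemma psd_eig_nonneg: "psd A \<Longrightarrow> onb u \<Longrightarrow> A *v u k = c *\<^sub>R u k \<Longrightarrow> 0 \<le> c"
proof -
  assume a: "psd A" "onb u" "A *v u k = c *\<^sub>R u k"
  show ?thesis using psd_qf[OF a(1), of "u k"] eig_qf[OF a(2,3)] by simp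
qed

lemma not_psd_neg_eig:
  fixes H :: "complex^'n^'n"
  assumes "hermitian_mat H" "\<not> psd H"
  shows "\<exists>v (l::real). cinner v v = 1 \<and> H *v v = l *\<^sub>R v \<and> l < 0"
proof -
  obtain u l where o: "onb u" and e: "\<And>k. H *v u k = l k *\<^sub>R u k" using spectral[OF assms(1)] by blast
  have "H = fc u l" by (rule fc_eig[OF o e])
  show ?thesis
  proof (rule ccontr)
    assume "\<not> ?thesis"
    then have "0 \<le> l k" for k using e[of k] onb_orth[OF o, of k k] by force
    then have "psd (fc u l)" by (rule fc_psd)
    with \<open>H = fc u l\<close> assms(2) show False by simp
  qed
qed

lemma sqrt_exists:
  fixes A :: "complex^'n^'n"
  assumes "psd A"
  shows "\<exists>R. psd R \<and> R ** R = A"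
proof -
  obtain u l where o: "onb u" and e: "\<And>k. A *v u k = l k *\<^sub>R u k" using spectral[OF psd_herm[OF assms]] by blast
  have l0: "0 \<le> l k" for k by (rule psd_eig_nonneg[OF assms o e[of k]])
  define R where "R = fc u (\<lambda>k. sqrt (l k))"
  have "psd R" unfolding R_def by (rule fc_psd) (simp add: l0)
  moreover have "R ** R = A"
  proof -
    have "(\<lambda>k. sqrt (l k) * sqrt (l k)) = l" using l0 by (simp add: fun_eq_iff)
    then show ?thesis unfolding R_def fc_mult[OF o] using fc_eig[OF o e] by simp
  qed
  ultimately show ?thesis by blast
qed

lemma sqrt_unique:
  fixes B C :: "complex^'n^'n"
  assumes B: "psd B" and C: "psd C" and eq: "B ** B = C ** C"
  shows "B = C"
proof -
  obtain u c where o: "onb u" and e: "\<And>k. C *v u k = c k *\<^sub>R u k" using spectral[OF psd_herm[OF C]] by blast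
  have c0: "0 \<le> c k" for k by (rule psd_eig_nonneg[OF C o e[of k]])
  have "B *v u k = C *v u k" for k
  proof -
    define x where "x = u k"
    define a where "a = c k"
    have Cx: "C *v x = a *\<^sub>R x" by (simp add: x_def a_def e)
    have "B *v (B *v x) = (C ** C) *v x" by (simp add: matrix_vector_mul_assoc eq)
    also have "\<dots> = C *v (C *v x)" by (simp add: matrix_vector_mul_assoc)
    also have "\<dots> = (a * a) *\<^sub>R x" by (simp add: Cx mv_scaleR)
    finally have BBx: "B *v (B *v x) = (a * a) *\<^sub>R x" .
    define w where "w = B *v x - a *\<^sub>R x"
    have Bw: "B *v w = (- a) *\<^sub>R w"
      by (simp add: w_def mv_diff mv_scaleR BBx algebra_simps)
    have "cinner w (B *v w) = - of_real a * cinner w w"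
      by (simp add: Bw cinner_scaleR_right cinner_minus_right)
    then have "Re (cinner w (B *v w)) = - a * Re (cinner w w)" by simp
    moreover have "0 \<le> Re (cinner w (B *v w))" by (rule psd_qf[OF B])
    moreover have "0 \<le> Re (cinner w w)" by (rule cinner_self_ge0)
    ultimately have z: "a * Re (cinner w w) = 0" using c0[of k] unfolding a_def
      by (metis add.inverse_neutral mult_minus_left mult_nonneg_nonneg neg_0_le_iff_le order_antisym)
    show ?thesis
    proof (cases "a = 0")
      case False
      then have "Re (cinner w w) = 0" using z by simp
      then have "cinner w w = 0" using cinner_self_ge0(2)[of w] by (simp add: complex_eq_iff)
      then have "w = 0" by (simp add: cinner_self_eq0)
      then show ?thesis using Cx by (simp add: w_def x_def)
    next
      case True
      have "cinner (B *v x) (B *v x) = cinner x (B *v (B *v x))"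
        by (rule hermitian_adj[OF psd_herm[OF B]])
      also have "\<dots> = 0" using True by (simp add: BBx)
      finally have "B *v x = 0" by (simp add: cinner_self_eq0)
      then show ?thesis using Cx True by (simp add: x_def)
    qed
  qed
  then show ?thesis by (rule onb_eq[OF o])
qed

lemma mat_sqrt:
  fixes A :: "complex^'n^'n"
  assumes "psd A"
  shows "psd (mat_sqrt A)" "mat_sqrt A ** mat_sqrt A = A"
proof -
  have ex: "\<exists>!B. psd B \<and> B ** B = A"
    using sqrt_exists[OF assms] sqrt_unique by metis
  have "psd (mat_sqrt A) \<and> mat_sqrt A ** mat_sqrt A = A"
    unfolding mat_sqrt_def by (rule theI'[OF ex])
  then show "psd (mat_sqrt A)" "mat_sqrt A ** mat_sqrt A = A" by auto
qed

lemma psd_antisym: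
  fixes A B :: "complex^'n^'n"
  assumes "psd (B - A)" "psd (A - B)"
  shows "A = B"
proof -
  define H where "H = B - A"
  obtain u l where o: "onb u" and e: "\<And>k. H *v u k = l k *\<^sub>R u k"
    using spectral[OF psd_herm[OF assms(1)]] unfolding H_def by blast
  have e2: "(A - B) *v u k = (- l k) *\<^sub>R u k" for k
    using e[of k] unfolding H_def by (simp add: matrix_vector_mult_diff_rdistrib algebra_simps)
  have "0 \<le> l k" "0 \<le> - l k" for k
    using psd_eig_nonneg[OF assms(1) o e[of k, unfolded H_def]] psd_eig_nonneg[OF assms(2) o e2[of k]] by auto
  then have "l k = 0" for k by (meson order_antisym neg_0_le_iff_le)
  then have "H *v u k = 0 *v u k" for k by (simp add: e)
  then have "H = 0" by (rule onb_eq[OF o])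
  then show ?thesis by (simp add: H_def)
qed



definition vtop :: "complex^('d+'d) \<Rightarrow> complex^'d" where "vtop v = (\<chi> a. v $ Inl a)"
definition vbot :: "complex^('d+'d) \<Rightarrow> complex^'d" where "vbot v = (\<chi> a. v $ Inr a)"
definition vjoin :: "complex^'d \<Rightarrow> complex^'d \<Rightarrow> complex^('d+'d)" where
  "vjoin u w = (\<chi> i. case i of Inl a \<Rightarrow> u $ a | Inr a \<Rightarrow> w $ a)"

lemma sum_UNIV_plus: "(\<Sum>i\<in>(UNIV::('a::finite+'b::finite) set). f i) = (\<Sum>a\<in>UNIV. f (Inl a)) + (\<Sum>b\<in>UNIV. f (Inr b))"
  using sum.Plus[of "UNIV::'a set" "UNIV::'b set" f] by (simp add: comp_def)

definition F4 :: "complex^'d^'d \<Rightarrow> complex^'d^'d \<Rightarrow> complex^'d^'d \<Rightarrow> complex^'d^'d \<Rightarrow> complex^'d \<Rightarrow> complex^'d \<Rightarrow> complex" where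
  "F4 P X Y Q u w = cinner u (P *v u) + cinner u (X *v w) + cinner w (Y *v u) + cinner w (Q *v w)"

lemma block_qf: "cinner v (block2 P X Y Q *v v) = F4 P X Y Q (vtop v) (vbot v)"
  unfolding F4_def cinner_def matrix_vector_mult_def block2_def vtop_def vbot_def
  by (simp add: sum_UNIV_plus sum_distrib_left sum.distrib algebra_simps)

lemma vtop_join[simp]: "vtop (vjoin u w) = u" and vbot_join[simp]: "vbot (vjoin u w) = w"
  by (simp_all add: vtop_def vbot_def vjoin_def vec_eq_iff)

lemma adjoint_block: "adjoint_mat (block2 P X Y Q) = block2 (adjoint_mat P) (adjoint_mat Y) (adjoint_mat X) (adjoint_mat Q)"
  unfolding adjoint_mat_def block2_def vec_eq_iff by (auto split: sum.splits)

lemma psd_block_iff: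
  assumes "hermitian_mat P" "hermitian_mat Q" "hermitian_mat X"
  shows "psd (block2 P X X Q) \<longleftrightarrow> (\<forall>u w. 0 \<le> Re (F4 P X X Q u w))"
proof -
  have h: "hermitian_mat (block2 P X X Q)"
    using assms unfolding hermitian_mat_def adjoint_block by simp
  show ?thesis unfolding psd_iff block_qf using h by (metis vtop_join vbot_join)
qed

lemma adjoint_mult: "adjoint_mat (A ** B) = adjoint_mat B ** adjoint_mat (A::complex^'n^'n)"
  by (simp add: adjoint_mat_def matrix_matrix_mult_def vec_eq_iff cnj_sum mult.commute)

lemma adjoint_adjoint[simp]: "adjoint_mat (adjoint_mat A) = A"
  by (simp add: adjoint_mat_def vec_eq_iff)

lemma cong_qf: "hermitian_mat S \<Longrightarrow> cinner u ((S ** Z ** S) *v w) = cinner (S *v u) (Z *v (S *v w))"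
  by (simp add: hermitian_adj flip: matrix_vector_mul_assoc)

lemma herm_cong: "hermitian_mat S \<Longrightarrow> hermitian_mat Z \<Longrightarrow> hermitian_mat (S ** Z ** S)"
  by (simp add: hermitian_mat_def adjoint_mult matrix_mul_assoc)

lemma psd_cong: "hermitian_mat S \<Longrightarrow> psd Z \<Longrightarrow> psd (S ** Z ** S)"
  unfolding psd_iff by (simp add: herm_cong cong_qf)

lemma herm_diff: "hermitian_mat A \<Longrightarrow> hermitian_mat B \<Longrightarrow> hermitian_mat (A - B)"
  by (simp add: hermitian_mat_def adjoint_mat_def vec_eq_iff)

lemma herm_add: "hermitian_mat A \<Longrightarrow> hermitian_mat B \<Longrightarrow> hermitian_mat (A + B)"
  by (simp add: hermitian_mat_def adjoint_mat_def vec_eq_iff)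

lemma herm_mat1: "hermitian_mat (mat 1 :: complex^'n^'n)"
  by (simp add: hermitian_mat_def adjoint_mat_def vec_eq_iff mat_def)

lemma sqrt_mono:
  fixes Z W :: "complex^'n^'n"
  assumes Z: "psd Z" and W: "psd W" and D2: "psd (W ** W - Z ** Z)"
  shows "psd (W - Z)"
proof (rule ccontr)
  assume np: "\<not> psd (W - Z)"
  obtain v l where v: "cinner v v = 1" "(W - Z) *v v = l *\<^sub>R v" "l < 0"
    using not_psd_neg_eig[OF herm_diff[OF psd_herm[OF W] psd_herm[OF Z]] np] by blast
  have Wv: "W *v v = Z *v v + l *\<^sub>R v"
    using v(2) by (simp add: matrix_vector_mult_diff_rdistrib algebra_simps)
  have hW: "hermitian_mat W" and hZ: "hermitian_mat Z" using W Z by (simp_all add: psd_herm)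
  define z where "z = cinner v (Z *v v)"
  have zr: "z = of_real (Re z)" using herm_qf_real[OF hZ, of v] by (simp add: z_def complex_eq_iff)
  have Zvv: "cinner (Z *v v) v = z" by (simp add: z_def hermitian_adj[OF hZ])
  have "cinner v (W *v v) = z + of_real l" unfolding Wv cinner_add_right cinner_scaleR_right v(1) z_def by simp
  then have "0 \<le> Re z + l" using psd_qf[OF W, of v] by simp
  have "cinner v ((W ** W - Z ** Z) *v v) = cinner v (W *v (W *v v)) - cinner v (Z *v (Z *v v))"
    by (simp add: matrix_vector_mult_diff_rdistrib cinner_diff_right flip: matrix_vector_mul_assoc)
  also have "\<dots> = cinner (W *v v) (W *v v) - cinner (Z *v v) (Z *v v)"
    by (simp add: hermitian_adj[OF hW] hermitian_adj[OF hZ])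
  also have "\<dots> = of_real l * z + of_real l * z + of_real l * of_real l"
    unfolding Wv cinner_add_left cinner_add_right cinner_scaleR_left cinner_scaleR_right v(1) Zvv z_def
    by (simp add: algebra_simps)
  finally have "Re (cinner v ((W ** W - Z ** Z) *v v)) = 2 * l * Re z + l * l"
    by simp
  moreover have "0 \<le> Re (cinner v ((W ** W - Z ** Z) *v v))" by (rule psd_qf[OF D2])
  ultimately have "0 \<le> 2 * l * Re z + l * l" by simp
  moreover have "l * Re z \<le> l * (- l)" using \<open>0 \<le> Re z + l\<close> v(3)
    by (intro mult_left_mono_neg) auto
  moreover have "l * l > 0" using v(3) by (simp add: mult_neg_neg)
  ultimately show False by (simp add: algebra_simps)
qed



lemma mm_diff_left: "(A - B) ** (C::complex^'n^'n) = A ** C - B ** C"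
  by (simp add: matrix_matrix_mult_def vec_eq_iff sum_subtractf algebra_simps)
lemma mm_diff_right: "(C::complex^'n^'n) ** (A - B) = C ** A - C ** B"
  by (simp add: matrix_matrix_mult_def vec_eq_iff sum_subtractf algebra_simps)
lemma mm_add_left: "(A + B) ** (C::complex^'n^'n) = A ** C + B ** C"
  by (simp add: matrix_matrix_mult_def vec_eq_iff sum.distrib algebra_simps)

lemma F4_cong: "hermitian_mat S \<Longrightarrow>
  F4 (S ** A ** S) (S ** B ** S) (S ** B' ** S) (S ** D ** S) a b = F4 A B B' D (S *v a) (S *v b)"
  unfolding F4_def by (simp add: cong_qf)

lemma herm_sq: "hermitian_mat Z \<Longrightarrow> hermitian_mat (Z ** Z)"
  by (simp add: hermitian_mat_def adjoint_mult)

lemma cinner_minus_left: "cinner (- v) w = - cinner v w"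
  by (simp add: cinner_def sum_negf)

lemma mv_minus: "A *v (- x) = - (A *v (x::complex^'n))"
  by (simp add: vec_eq_iff matrix_vector_mult_def sum_negf)

lemma RR_herm: "hermitian_mat R \<Longrightarrow> cinner (R *v b) (R *v b) = cinner b ((R ** R) *v b)"
  by (simp add: hermitian_adj matrix_vector_mul_assoc)

lemma F4_square: "hermitian_mat R \<Longrightarrow> F4 (mat 1) R R (R ** R) a b = cinner (a + R *v b) (a + R *v b)"
proof -
  assume h: "hermitian_mat R"
  have 1: "cinner (R *v b) a = cinner b (R *v a)" by (rule hermitian_adj[OF h])
  show ?thesis unfolding F4_def cinner_add_left cinner_add_right 1 RR_herm[OF h]
    by (simp add: algebra_simps)
qed

lemma F4_schur: "hermitian_mat Z \<Longrightarrow> F4 (mat 1) Z Z C (- (Z *v b)) b = cinner b ((C - Z ** Z) *v b)"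
proof -
  assume h: "hermitian_mat Z"
  show ?thesis unfolding F4_def mv_minus cinner_minus_left cinner_minus_right
      matrix_vector_mult_diff_rdistrib cinner_diff_right
    using RR_herm[OF h, of b] by (simp add: matrix_vector_mul_assoc)
qed

lemma gm_pd:
  fixes P Q :: "complex^'d^'d" and e :: real
  assumes P: "psd P" and Q: "psd Q" and e: "e > 0"
    and Pe: "\<And>v. e * Re (cinner v v) \<le> Re (cinner v (P *v v))"
  shows "\<exists>M. psd M \<and> psd (block2 P M M Q) \<and> (\<forall>Y. psd Y \<and> psd (block2 P Y Y Q) \<longrightarrow> psd (M - Y))"
proof -
  obtain u l where o: "onb u" and eig: "\<And>k. P *v u k = l k *\<^sub>R u k" using spectral[OF psd_herm[OF P]] by blast
  have lpos: "0 < l k" for k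
  proof -
    have "cinner (u k) (P *v u k) = of_real (l k)" by (rule eig_qf[OF o eig])
    then have "e * 1 \<le> l k" using Pe[of "u k"] onb_orth[OF o, of k k] by simp
    then show ?thesis using e by simp
  qed
  define S where "S = fc u (\<lambda>k. sqrt (l k))"
  define T where "T = fc u (\<lambda>k. 1 / sqrt (l k))"
  have f1: "(\<lambda>k. sqrt (l k) * (1 / sqrt (l k))) = (\<lambda>k. 1)" "(\<lambda>k. 1 / sqrt (l k) * sqrt (l k)) = (\<lambda>k. 1)"
    using lpos by (auto simp: fun_eq_iff) (metis less_irrefl)+
  have ST: "S ** T = mat 1" unfolding S_def T_def fc_mult[OF o] f1 fc_one[OF o] ..
  have TS: "T ** S = mat 1" unfolding S_def T_def fc_mult[OF o] f1 fc_one[OF o] ..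
  have f2: "(\<lambda>k. sqrt (l k) * sqrt (l k)) = l" using lpos by (auto simp: fun_eq_iff less_imp_le)
  have SS: "S ** S = P" unfolding S_def fc_mult[OF o] f2 using fc_eig[OF o eig] by simp
  have hS: "hermitian_mat S" and hT: "hermitian_mat T" unfolding S_def T_def by (rule fc_herm)+
  have TSr: "X ** T ** S = X" for X :: "complex^'d^'d" by (metis matrix_mul_assoc TS matrix_mul_rid)
  have STr: "X ** S ** T = X" for X :: "complex^'d^'d" by (metis matrix_mul_assoc ST matrix_mul_rid)
  define C where "C = T ** Q ** T"
  have C: "psd C" unfolding C_def by (rule psd_cong[OF hT Q])
  define R where "R = mat_sqrt C"
  have R: "psd R" and RR: "R ** R = C" unfolding R_def using mat_sqrt[OF C] by auto
  have hR: "hermitian_mat R" using R by (rule psd_herm)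
  define M where "M = S ** R ** S"
  have M: "psd M" unfolding M_def by (rule psd_cong[OF hS R])
  have hP: "hermitian_mat P" and hQ: "hermitian_mat Q" using P Q by (simp_all add: psd_herm)
  have Peq: "P = S ** mat 1 ** S" using SS by simp
  have Qeq: "Q = S ** C ** S" unfolding C_def by (simp add: matrix_mul_assoc STr TSr ST)
  have TPT: "T ** P ** T = mat 1" unfolding Peq by (simp add: matrix_mul_assoc TSr STr TS ST)
  have blockM: "psd (block2 P M M Q)"
    unfolding psd_block_iff[OF hP hQ psd_herm[OF M]]
  proof (intro allI)
    fix a b
    have "F4 P M M Q a b = F4 (mat 1) R R C (S *v a) (S *v b)"
      unfolding M_def by (subst Peq, subst Qeq, rule F4_cong[OF hS])
    also have "\<dots> = cinner (S *v a + R *v (S *v b)) (S *v a + R *v (S *v b))"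
      unfolding RR[symmetric] by (rule F4_square[OF hR])
    finally show "0 \<le> Re (F4 P M M Q a b)" using cinner_self_ge0 by simp
  qed
  have maxM: "psd (M - Y)" if Y: "psd Y" and BY: "psd (block2 P Y Y Q)" for Y
  proof -
    have hY: "hermitian_mat Y" using Y by (rule psd_herm)
    define Z where "Z = T ** Y ** T"
    have Z: "psd Z" unfolding Z_def by (rule psd_cong[OF hT Y])
    have hZ: "hermitian_mat Z" using Z by (rule psd_herm)
    have F: "0 \<le> Re (F4 (mat 1) Z Z C a b)" for a b
    proof -
      have "F4 (mat 1) Z Z C a b = F4 P Y Y Q (T *v a) (T *v b)"
        unfolding Z_def C_def TPT[symmetric] by (rule F4_cong[OF hT])
      then show ?thesis using BY unfolding psd_block_iff[OF hP hQ hY] by simp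
    qed
    have "0 \<le> Re (cinner b ((R ** R - Z ** Z) *v b))" for b
    proof -
      have "F4 (mat 1) Z Z C (- (Z *v b)) b = cinner b ((C - Z ** Z) *v b)"
        by (rule F4_schur[OF hZ])
      then show ?thesis using F[of "- (Z *v b)" b] RR by simp
    qed
    then have "psd (R ** R - Z ** Z)"
      unfolding psd_iff using herm_diff[OF herm_sq[OF hR] herm_sq[OF hZ]] by blast
    then have "psd (R - Z)" by (rule sqrt_mono[OF Z R])
    then have "psd (S ** (R - Z) ** S)" by (rule psd_cong[OF hS])
    moreover have "S ** (R - Z) ** S = M - Y"
      unfolding M_def Z_def by (simp add: mm_diff_left mm_diff_right matrix_mul_assoc STr TSr ST)
    ultimately show ?thesis by simp
  qed
  show ?thesis using M blockM maxM by blast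
qed



lemma mat_mv: "mat c *v v = c *s (v::complex^'n)"
  by (simp add: vec_eq_iff matrix_vector_mult_def mat_def if_distrib if_distribR cong: if_cong)

definition sh :: "complex^'n^'n \<Rightarrow> real \<Rightarrow> complex^'n^'n" where
  "sh P e = P + mat (of_real e)"

lemma sh_qf: "cinner v (sh P e *v v) = cinner v (P *v v) + of_real e * cinner v v"
  by (simp add: sh_def matrix_vector_mult_add_rdistrib cinner_add_right mat_mv cinner_scale_right)

lemma herm_sh: "hermitian_mat P \<Longrightarrow> hermitian_mat (sh P e)"
  by (simp add: sh_def hermitian_mat_def adjoint_mat_def vec_eq_iff mat_def)

lemma psd_sh: "psd P \<Longrightarrow> 0 \<le> e \<Longrightarrow> psd (sh P e)"
  unfolding psd_iff using cinner_self_ge0 by (auto simp: herm_sh sh_qf intro!: add_nonneg_nonneg mult_nonneg_nonneg)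

lemma sh0[simp]: "sh P 0 = P" by (simp add: sh_def)

lemma F4_sh: "F4 (sh P e) X X (sh Q e) u w = F4 P X X Q u w + of_real e * (cinner u u + cinner w w)"
  unfolding F4_def sh_def
  by (simp add: matrix_vector_mult_add_rdistrib cinner_add_right mat_mv cinner_scale_right algebra_simps)

lemma block_mono:
  assumes hP: "hermitian_mat P" and hQ: "hermitian_mat Q" and hY: "hermitian_mat Y"
    and ee: "e \<le> e'" and B: "psd (block2 (sh P e) Y Y (sh Q e))"
  shows "psd (block2 (sh P e') Y Y (sh Q e'))"
proof -
  have "0 \<le> Re (F4 (sh P e) Y Y (sh Q e) u w)" for u w
    using B unfolding psd_block_iff[OF herm_sh[OF hP] herm_sh[OF hQ] hY] by blast
  then have "0 \<le> Re (F4 (sh P e') Y Y (sh Q e') u w)" for u w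
  proof -
    have "Re (F4 (sh P e) Y Y (sh Q e) u w) \<le> Re (F4 (sh P e') Y Y (sh Q e') u w)"
      unfolding F4_sh using ee cinner_self_ge0[of u] cinner_self_ge0[of w]
      by (simp add: add_nonneg_nonneg mult_right_mono)
    then show ?thesis using \<open>\<And>u w. 0 \<le> Re (F4 (sh P e) Y Y (sh Q e) u w)\<close>[of u w] by simp
  qed
  then show ?thesis unfolding psd_block_iff[OF herm_sh[OF hP] herm_sh[OF hQ] hY] by blast
qed

lemma polar: "cinner x (M *v y) = (1/4) * (cinner (y + x) (M *v (y + x)) - cinner (y - x) (M *v (y - x))
   + \<i> * cinner (y + \<i> *s x) (M *v (y + \<i> *s x)) - \<i> * cinner (y - \<i> *s x) (M *v (y - \<i> *s x)))"
  by (simp add: mv_add mv_diff mv_scale cinner_add_left cinner_add_right cinner_diff_left cinner_diff_right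
      cinner_scale_left cinner_scale_right algebra_simps)

lemma psd_limit:
  fixes A :: "nat \<Rightarrow> complex^'n^'n"
  assumes ps: "\<And>n. psd (A n)" and lim: "\<And>i j. (\<lambda>n. A n $ i $ j) \<longlonglongrightarrow> B $ i $ j"
  shows "psd B"
proof -
  have h: "hermitian_mat B" unfolding hermitian_mat_def adjoint_mat_def vec_eq_iff
  proof (intro allI)
    fix i j
    have "A n $ i $ j = cnj (A n $ j $ i)" for n
      using psd_herm[OF ps[of n]] unfolding hermitian_mat_def adjoint_mat_def vec_eq_iff by simp
    then have "(\<lambda>n. A n $ i $ j) \<longlonglongrightarrow> cnj (B $ j $ i)" using tendsto_cnj[OF lim[of j i]] by simp
    then show "(\<chi> i j. cnj (B $ j $ i)) $ i $ j = B $ i $ j" using lim[of i j] LIMSEQ_unique by force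
  qed
  have "0 \<le> Re (cinner v (B *v v))" for v
  proof -
    have "(\<lambda>n. cinner v (A n *v v)) \<longlonglongrightarrow> cinner v (B *v v)"
      unfolding qf_expand by (intro tendsto_intros lim)
    then have "(\<lambda>n. Re (cinner v (A n *v v))) \<longlonglongrightarrow> Re (cinner v (B *v v))" by (rule tendsto_Re)
    then show ?thesis by (rule LIMSEQ_le_const) (use psd_qf[OF ps] in auto)
  qed
  then show ?thesis using h by (simp add: psd_iff)
qed



lemma entry_cinner: "cinner (axis i 1) (A *v axis j 1) = A $ i $ j"
  by (simp add: cinner_def matrix_vector_mult_def axis_def if_distrib if_distribR cong: if_cong)

lemma block2_entry: "block2 P X Y Q $ i $ j = (case (i, j) of
      (Inl a, Inl b) \<Rightarrow> P $ a $ b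
    | (Inl a, Inr b) \<Rightarrow> X $ a $ b
    | (Inr a, Inl b) \<Rightarrow> Y $ a $ b
    | (Inr a, Inr b) \<Rightarrow> Q $ a $ b)"
  by (simp add: block2_def)

lemma gm_exists:
  fixes P Q :: "complex^'d^'d"
  assumes P: "psd P" and Q: "psd Q"
  shows "\<exists>M. psd M \<and> psd (block2 P M M Q) \<and> (\<forall>Y. psd Y \<and> psd (block2 P Y Y Q) \<longrightarrow> psd (M - Y))"
proof -
  have hP: "hermitian_mat P" and hQ: "hermitian_mat Q" using P Q by (simp_all add: psd_herm)
  define ep where "ep n = inverse (real (Suc n))" for n
  have ep_pos: "ep n > 0" for n by (simp add: ep_def)
  have ep_lim: "ep \<longlonglongrightarrow> 0" unfolding ep_def by (rule LIMSEQ_inverse_real_of_nat)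
  have ep_mono: "n \<le> m \<Longrightarrow> ep m \<le> ep n" for n m by (simp add: ep_def le_imp_inverse_le)
  have "\<exists>M. psd M \<and> psd (block2 (sh P (ep n)) M M (sh Q (ep n))) \<and>
      (\<forall>Y. psd Y \<and> psd (block2 (sh P (ep n)) Y Y (sh Q (ep n))) \<longrightarrow> psd (M - Y))" for n
  proof (rule gm_pd[OF psd_sh[OF P] psd_sh[OF Q] ep_pos])
    fix v
    show "ep n * Re (cinner v v) \<le> Re (cinner v (sh P (ep n) *v v))"
      unfolding sh_qf using psd_qf[OF P, of v] cinner_self_ge0(2)[of v] by simp
  qed (use ep_pos[of n] in auto)
  then obtain Mf where Mf: "\<And>n. psd (Mf n)" "\<And>n. psd (block2 (sh P (ep n)) (Mf n) (Mf n) (sh Q (ep n)))"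
     "\<And>n Y. psd Y \<Longrightarrow> psd (block2 (sh P (ep n)) Y Y (sh Q (ep n))) \<Longrightarrow> psd (Mf n - Y)"
    by metis
  have mono: "psd (Mf n - Mf m)" if "n \<le> m" for n m
    using Mf(3)[OF Mf(1)[of m] block_mono[OF hP hQ psd_herm[OF Mf(1)[of m]] ep_mono[OF that] Mf(2)[of m]]] .
  define q where "q n v = Re (cinner v (Mf n *v v))" for n v
  have qc: "cinner v (Mf n *v v) = of_real (q n v)" for n v
    using herm_qf_real[OF psd_herm[OF Mf(1)[of n]], of v] by (simp add: q_def complex_eq_iff)
  have "convergent (\<lambda>n. q n v)" for v
  proof -
    have "decseq (\<lambda>n. q n v)" unfolding decseq_def
    proof (intro allI impI)
      fix m n :: nat assume "m \<le> n"
      then have "0 \<le> Re (cinner v ((Mf m - Mf n) *v v))" using psd_qf[OF mono] by blast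
      then show "q n v \<le> q m v"
        by (simp add: q_def matrix_vector_mult_diff_rdistrib cinner_diff_right)
    qed
    moreover have "\<forall>i. 0 \<le> q i v" using psd_qf[OF Mf(1)] by (simp add: q_def)
    ultimately show ?thesis using decseq_convergent by (metis convergentI)
  qed
  then have qL: "(\<lambda>n. q n v) \<longlonglongrightarrow> lim (\<lambda>n. q n v)" for v by (simp add: convergent_LIMSEQ_iff)
  define L where "L v = lim (\<lambda>n. q n v)" for v
  define M0 :: "complex^'d^'d" where "M0 = (\<chi> i j. (1/4) * (of_real (L (axis j 1 + axis i 1)) - of_real (L (axis j 1 - axis i 1))
      + \<i> * of_real (L (axis j 1 + \<i> *s axis i 1)) - \<i> * of_real (L (axis j 1 - \<i> *s axis i 1))))"
  have lim: "(\<lambda>n. Mf n $ i $ j) \<longlonglongrightarrow> M0 $ i $ j" for i j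
  proof -
    have "Mf n $ i $ j = (1/4) * (of_real (q n (axis j 1 + axis i 1)) - of_real (q n (axis j 1 - axis i 1))
      + \<i> * of_real (q n (axis j 1 + \<i> *s axis i 1)) - \<i> * of_real (q n (axis j 1 - \<i> *s axis i 1)))" for n
      unfolding entry_cinner[symmetric] polar[of "axis i 1" "Mf n" "axis j 1"] qc ..
    then show ?thesis unfolding M0_def L_def by (simp only: vec_lambda_beta) (intro tendsto_intros qL)
  qed
  have M0: "psd M0" by (rule psd_limit[OF Mf(1) lim])
  have block0: "psd (block2 P M0 M0 Q)"
  proof (rule psd_limit[OF Mf(2)])
    fix i j
    have shl: "(\<lambda>n. sh A (ep n) $ a $ b) \<longlonglongrightarrow> A $ a $ b" for A :: "complex^'d^'d" and a b
    proof -
      have e0: "(\<lambda>n. complex_of_real (ep n)) \<longlonglongrightarrow> 0" using tendsto_of_real[OF ep_lim] by simp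
      show ?thesis
      proof (cases "a = b")
        case True
        then show ?thesis using tendsto_add[OF tendsto_const e0, of "A$a$b"] by (simp add: sh_def mat_def)
      next
        case False
        then show ?thesis by (simp add: sh_def mat_def)
      qed
    qed
    show "(\<lambda>n. block2 (sh P (ep n)) (Mf n) (Mf n) (sh Q (ep n)) $ i $ j) \<longlonglongrightarrow> block2 P M0 M0 Q $ i $ j"
      unfolding block2_entry by (auto split: sum.splits intro: shl lim)
  qed
  have max0: "psd (M0 - Y)" if Y: "psd Y" and BY: "psd (block2 P Y Y Q)" for Y
  proof (rule psd_limit)
    fix n
    show "psd (Mf n - Y)"
      using Mf(3)[OF Y block_mono[OF hP hQ psd_herm[OF Y], of 0 "ep n"]] BY ep_pos[of n] by simp
  next
    fix i j
    show "(\<lambda>n. (Mf n - Y) $ i $ j) \<longlonglongrightarrow> (M0 - Y) $ i $ j"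
      by (simp add: tendsto_diff lim)
  qed
  show ?thesis using M0 block0 max0 by blast
qed



lemma geo_mean_prop:
  fixes P Q :: "complex^'d^'d"
  assumes P: "psd P" and Q: "psd Q"
  shows "psd (P # Q) \<and> psd (block2 P (P # Q) (P # Q) Q) \<and> (\<forall>Y. psd Y \<and> psd (block2 P Y Y Q) \<longrightarrow> loewner_le Y (P # Q))"
proof -
  let ?Pr = "\<lambda>X. psd X \<and> psd (block2 P X X Q) \<and> (\<forall>Y. psd Y \<and> psd (block2 P Y Y Q) \<longrightarrow> loewner_le Y X)"
  obtain M where M1: "psd M" and M2: "psd (block2 P M M Q)"
    and M3: "\<And>Y. psd Y \<Longrightarrow> psd (block2 P Y Y Q) \<Longrightarrow> psd (M - Y)"
    using gm_exists[OF P Q] by blast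
  have PM: "?Pr M" using M1 M2 M3 unfolding loewner_le_def by blast
  have "X = M" if X: "?Pr X" for X
  proof -
    from X have X1: "psd X" and X2: "psd (block2 P X X Q)"
      and X3: "\<forall>Y. psd Y \<and> psd (block2 P Y Y Q) \<longrightarrow> loewner_le Y X" by auto
    have a: "psd (X - M)" using X3 M1 M2 unfolding loewner_le_def by blast
    have b: "psd (M - X)" using M3[OF X1 X2] .
    show ?thesis by (rule psd_antisym[OF b a])
  qed
  then have "\<exists>!X. ?Pr X" using PM by (intro ex1I[of ?Pr M])
  then show ?thesis unfolding geo_mean_def by (rule theI')
qed

definition mconj :: "complex^'n^'n \<Rightarrow> complex^'n^'n" where "mconj A = (\<chi> i j. cnj (A $ i $ j))"
definition vcnj :: "complex^'n \<Rightarrow> complex^'n" where "vcnj v = (\<chi> i. cnj (v $ i))"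

lemma mconj_qf: "cinner v (mconj A *v v) = cnj (cinner (vcnj v) (A *v vcnj v))"
  by (simp add: cinner_def mconj_def vcnj_def matrix_vector_mult_def cnj_sum)

lemma psd_mconj: "psd A \<Longrightarrow> psd (mconj A)"
proof -
  assume A: "psd A"
  have "hermitian_mat (mconj A)" using psd_herm[OF A]
    by (simp add: hermitian_mat_def adjoint_mat_def mconj_def vec_eq_iff)
  moreover have "0 \<le> Re (cinner v (mconj A *v v))" for v
    unfolding mconj_qf using psd_qf[OF A] by simp
  ultimately show ?thesis by (simp add: psd_iff)
qed

lemma mconj_mconj[simp]: "mconj (mconj A) = A" by (simp add: mconj_def vec_eq_iff)
lemma mconj_diff: "mconj (A - B) = mconj A - mconj B" by (simp add: mconj_def vec_eq_iff)
lemma herm_transpose: "hermitian_mat J \<Longrightarrow> transpose J = mconj J"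
  by (simp add: hermitian_mat_def adjoint_mat_def mconj_def transpose_def vec_eq_iff)

lemma mconj_block: "mconj (block2 P X Y Q) = block2 (mconj P) (mconj X) (mconj Y) (mconj Q)"
  unfolding mconj_def block2_def vec_eq_iff by (auto split: sum.splits)

lemma block_swap:
  assumes "hermitian_mat P" "hermitian_mat Q" "hermitian_mat X" "psd (block2 P X X Q)"
  shows "psd (block2 Q X X P)"
proof -
  have "F4 Q X X P u w = F4 P X X Q w u" for u w by (simp add: F4_def algebra_simps)
  then show ?thesis using assms(4) unfolding psd_block_iff[OF assms(1-3)] psd_block_iff[OF assms(2,1,3)] by simp
qed

lemma gm_real:
  fixes J :: "complex^'d^'d"
  assumes J: "psd J"
  shows "real_mat (J # transpose J)"
proof -
  have hJ: "hermitian_mat J" using J by (rule psd_herm)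
  have JT: "transpose J = mconj J" by (rule herm_transpose[OF hJ])
  have JTpsd: "psd (transpose J)" unfolding JT by (rule psd_mconj[OF J])
  have hJT: "hermitian_mat (mconj J)" using JTpsd unfolding JT by (rule psd_herm)
  define G where "G = J # transpose J"
  have G: "psd G" "psd (block2 J G G (mconj J))"
      "\<And>Y. psd Y \<Longrightarrow> psd (block2 J Y Y (mconj J)) \<Longrightarrow> loewner_le Y G"
    using geo_mean_prop[OF J JTpsd] unfolding G_def JT by auto
  have cl: "psd (block2 J (mconj Y) (mconj Y) (mconj J))" if "psd Y" "psd (block2 J Y Y (mconj J))" for Y
  proof -
    have "psd (block2 (mconj J) Y Y J)" by (rule block_swap[OF hJ hJT psd_herm[OF that(1)] that(2)])
    from psd_mconj[OF this] show ?thesis by (simp add: mconj_block)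
  qed
  have G1: "psd (mconj G)" by (rule psd_mconj[OF G(1)])
  have G2: "psd (block2 J (mconj G) (mconj G) (mconj J))" by (rule cl[OF G(1,2)])
  have a: "psd (G - mconj G)" using G(3)[OF G1 G2] by (simp add: loewner_le_def)
  have b: "psd (mconj G - G)" using psd_mconj[OF a] by (simp add: mconj_diff)
  have "mconj G = G" by (rule psd_antisym[OF a b])
  have c: "cnj (G $ i $ j) = G $ i $ j" for i j
  proof -
    have "mconj G $ i $ j = G $ i $ j" using \<open>mconj G = G\<close> by simp
    then show ?thesis by (simp add: mconj_def)
  qed
  have "Im (G $ i $ j) = 0" for i j using arg_cong[OF c[of i j], of Im] by simp
  then show ?thesis by (simp add: real_mat_def G_def)
qed



definition lc :: "('d \<Rightarrow> complex) \<Rightarrow> ('d::finite \<Rightarrow> complex^'n^'n) \<Rightarrow> complex^'n^'n" where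
  "lc c X = (\<Sum>j\<in>UNIV. csc (c j) (X j))"

lemma csc_mul_left: "csc c A ** B = csc c (A ** (B::complex^'n^'n))"
  by (simp add: csc_def matrix_matrix_mult_def vec_eq_iff sum_distrib_left mult.assoc)
lemma csc_mul_right: "A ** csc c B = csc c (A ** (B::complex^'n^'n))"
  by (simp add: csc_def matrix_matrix_mult_def vec_eq_iff sum_distrib_left mult_ac)
lemma sum_mul: "(\<Sum>k\<in>S. F k) ** (B::complex^'n^'n) = (\<Sum>k\<in>S. F k ** B)"
  by (induction S rule: infinite_finite_induct) (auto simp: mm_add_left)
lemma trace_csc: "trace (csc c (A::complex^'n^'n)) = c * trace A"
  by (simp add: csc_def trace_def sum_distrib_left)
lemma trace_adjoint: "trace (adjoint_mat (M::complex^'n^'n)) = cnj (trace M)"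
  by (simp add: trace_def adjoint_mat_def cnj_sum)

lemma trace_bilin: "trace (P1 ** lc b X ** P2 ** lc c X) = (\<Sum>j\<in>UNIV. \<Sum>i\<in>UNIV. b j * c i * trace (P1 ** X j ** P2 ** X i))"
  unfolding lc_def
  apply (simp add: mul_sum sum_mul csc_mul_left csc_mul_right trace_sum trace_csc sum_distrib_left mult.assoc)
  apply (rule trans[OF sum.swap])
  apply (simp add: mult_ac)
  done

lemma qf_trace:
  assumes "\<And>i j. K $ i $ j = trace (P1 ** X j ** P2 ** X i)"
  shows "cinner u (K *v w) = trace (P1 ** lc (\<lambda>j. w $ j) X ** P2 ** lc (\<lambda>i. cnj (u $ i)) X)"
proof -
  have "cinner u (K *v w) = (\<Sum>i\<in>UNIV. \<Sum>j\<in>UNIV. w $ j * cnj (u $ i) * trace (P1 ** X j ** P2 ** X i))"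
    by (simp add: cinner_def matrix_vector_mult_def assms sum_distrib_left mult_ac)
  also have "\<dots> = (\<Sum>j\<in>UNIV. \<Sum>i\<in>UNIV. w $ j * cnj (u $ i) * trace (P1 ** X j ** P2 ** X i))"
    by (rule sum.swap)
  finally show ?thesis unfolding trace_bilin .
qed

lemma qf_trace2:
  assumes "\<And>i j. K $ i $ j = trace (P1 ** X i ** P2 ** X j)"
  shows "cinner u (K *v w) = trace (P1 ** lc (\<lambda>i. cnj (u $ i)) X ** P2 ** lc (\<lambda>j. w $ j) X)"
  unfolding trace_bilin
  by (simp add: cinner_def matrix_vector_mult_def assms sum_distrib_left mult_ac)

lemma adjoint_lc: "(\<And>j. hermitian_mat (X j)) \<Longrightarrow> adjoint_mat (lc c X) = lc (\<lambda>j. cnj (c j)) X"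
  unfolding lc_def hermitian_mat_def adjoint_mat_def
  by (simp add: vec_eq_iff csc_def cnj_sum)

lemma mult_cnj_self: "z * cnj z = complex_of_real ((cmod z)^2)"
  by (metis cnj_mult_self mult.commute)

lemma trace_gram: "0 \<le> Re (trace (N ** adjoint_mat (N::complex^'n^'n)))"
proof -
  have "trace (N ** adjoint_mat N) = (\<Sum>i\<in>UNIV. \<Sum>k\<in>UNIV. complex_of_real ((cmod (N$i$k))^2))"
    by (simp add: trace_def matrix_matrix_mult_def adjoint_mat_def mult_cnj_self)
  then show ?thesis by (simp add: Re_sum sum_nonneg)
qed



lemma adjoint_add: "adjoint_mat (A + B) = adjoint_mat A + adjoint_mat (B::complex^'n^'n)"
  by (simp add: adjoint_mat_def vec_eq_iff)

lemma block_trace: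
  fixes S U W :: "complex^'n^'n"
  assumes hS: "adjoint_mat S = S"
  shows "trace (S ** S ** U ** mat 1 ** adjoint_mat U) + trace (S ** W ** S ** adjoint_mat U)
       + trace (S ** U ** S ** adjoint_mat W) + trace (S ** S ** adjoint_mat W ** mat 1 ** W)
       = trace ((S ** U + W ** S) ** adjoint_mat (S ** U + W ** S))"
proof -
  have t1: "trace (S ** S ** U ** mat 1 ** adjoint_mat U) = trace (S ** U ** (adjoint_mat U ** S))"
    using trace_mul_sym[of "S ** U ** adjoint_mat U" S] by (simp add: matrix_mul_assoc)
  have t2: "trace (S ** W ** S ** adjoint_mat U) = trace (W ** S ** (adjoint_mat U ** S))"
    using trace_mul_sym[of "W ** S ** adjoint_mat U" S] by (simp add: matrix_mul_assoc)
  have t3: "trace (S ** U ** S ** adjoint_mat W) = trace (S ** U ** (S ** adjoint_mat W))"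
    by (simp add: matrix_mul_assoc)
  have t4: "trace (S ** S ** adjoint_mat W ** mat 1 ** W) = trace (W ** S ** (S ** adjoint_mat W))"
    using trace_mul_sym[of "S ** S" "adjoint_mat W ** W"] trace_mul_sym[of "W ** S ** S" "adjoint_mat W"]
    by (simp add: matrix_mul_assoc)
  have "adjoint_mat (S ** U + W ** S) = adjoint_mat U ** S + S ** adjoint_mat W"
    by (simp add: adjoint_add adjoint_mult hS)
  then show ?thesis
    unfolding t1 t2 t3 t4 by (simp add: matrix_add_ldistrib mm_add_left trace_add algebra_simps)
qed

lemma trace_herm3:
  fixes P X1 X2 :: "complex^'n^'n"
  assumes "hermitian_mat P" "hermitian_mat X1" "hermitian_mat X2"
  shows "cnj (trace (P ** X1 ** X2)) = trace (P ** X2 ** X1)"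
proof -
  have "cnj (trace (P ** X1 ** X2)) = trace (X2 ** X1 ** P)"
    using assms unfolding trace_adjoint[symmetric] by (simp add: adjoint_mult hermitian_mat_def matrix_mul_assoc)
  also have "\<dots> = trace (P ** X2 ** X1)"
    using trace_mul_sym[of "X2 ** X1" P] by (simp add: matrix_mul_assoc)
  finally show ?thesis .
qed

lemma trace_herm4:
  fixes S X1 X2 :: "complex^'n^'n"
  assumes "hermitian_mat S" "hermitian_mat X1" "hermitian_mat X2"
  shows "cnj (trace (S ** X1 ** S ** X2)) = trace (S ** X2 ** S ** X1)"
proof -
  have "cnj (trace (S ** X1 ** S ** X2)) = trace (X2 ** S ** X1 ** S)"
    using assms unfolding trace_adjoint[symmetric] by (simp add: adjoint_mult hermitian_mat_def matrix_mul_assoc)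
  also have "\<dots> = trace (S ** X2 ** S ** X1)"
    using trace_mul_sym[of "X2 ** S ** X1" S] by (simp add: matrix_mul_assoc)
  finally show ?thesis .
qed

lemma trace_sym4: "trace (S ** X1 ** S ** X2) = trace (S ** X2 ** S ** (X1::complex^'n^'n))"
  using trace_mul_sym[of "S ** X1" "S ** X2"] by (simp add: matrix_mul_assoc)



theorem lemma11:
  fixes \<rho> :: "complex^'n^'n" and X :: "'d::finite \<Rightarrow> complex^'n^'n"
    and A J :: "complex^'d^'d"
  assumes "density_op \<rho>"
    and "\<And>i. hermitian_mat (X i)"
    and "A = (\<chi> i j. trace (mat_sqrt \<rho> ** X j ** mat_sqrt \<rho> ** X i))"
    and "J = (\<chi> i j. trace (\<rho> ** X j ** X i))"
  shows "real_mat A \<and> real_mat (J # transpose J) \<and> loewner_le A (J # transpose J)"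
proof -
  have rho: "psd \<rho>" using assms(1) by (simp add: density_op_def)
  have hrho: "hermitian_mat \<rho>" using rho by (rule psd_herm)
  have hX: "\<And>i. hermitian_mat (X i)" by (rule assms(2))
  define S where "S = mat_sqrt \<rho>"
  have S: "psd S" and SS: "S ** S = \<rho>" using mat_sqrt[OF rho] by (auto simp: S_def)
  define R where "R = mat_sqrt S"
  have R: "psd R" and RR: "R ** R = S" using mat_sqrt[OF S] by (auto simp: R_def)
  have hS: "hermitian_mat S" using S by (rule psd_herm)
  have hR: "hermitian_mat R" using R by (rule psd_herm)
  have hS': "adjoint_mat S = S" using hS by (simp add: hermitian_mat_def)
  have hR': "adjoint_mat R = R" using hR by (simp add: hermitian_mat_def)
  have Jent: "J $ i $ j = trace (\<rho> ** X j ** mat 1 ** X i)" for i j using assms(4) by simp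
  have Jent': "J $ i $ j = trace (\<rho> ** X j ** X i)" for i j using assms(4) by simp
  have JTent: "transpose J $ i $ j = trace (\<rho> ** X i ** mat 1 ** X j)" for i j
    using assms(4) by (simp add: transpose_def)
  have Aent: "A $ i $ j = trace (S ** X j ** S ** X i)" for i j using assms(3) by (simp add: S_def)
  define lcv where "lcv v = lc (\<lambda>j. v $ j) X" for v :: "complex^'d"
  have adjlcv: "adjoint_mat (lcv v) = lc (\<lambda>i. cnj (v $ i)) X" for v
    unfolding lcv_def using adjoint_lc[where X=X, OF hX] by simp
  have Jqf: "cinner u (J *v w) = trace (\<rho> ** lcv w ** mat 1 ** adjoint_mat (lcv u))" for u w
    unfolding adjlcv unfolding lcv_def by (rule qf_trace[OF Jent])
  have JTqf: "cinner u (transpose J *v w) = trace (\<rho> ** adjoint_mat (lcv u) ** mat 1 ** lcv w)" for u w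
    unfolding adjlcv unfolding lcv_def by (rule qf_trace2[OF JTent])
  have Aqf: "cinner u (A *v w) = trace (S ** lcv w ** S ** adjoint_mat (lcv u))" for u w
    unfolding adjlcv unfolding lcv_def by (rule qf_trace[OF Aent])
  have hJ: "hermitian_mat J"
    unfolding hermitian_mat_def adjoint_mat_def vec_eq_iff
    by (simp add: Jent' trace_herm3[OF hrho hX hX])
  have J: "psd J"
  proof -
    have "0 \<le> Re (cinner v (J *v v))" for v
    proof -
      have "trace (\<rho> ** lcv v ** mat 1 ** adjoint_mat (lcv v)) = trace ((S ** lcv v) ** adjoint_mat (S ** lcv v))"
        using trace_mul_sym[of "S ** lcv v ** adjoint_mat (lcv v)" S]
        by (simp add: SS[symmetric] adjoint_mult hS' matrix_mul_assoc)
      then show ?thesis unfolding Jqf using trace_gram by simp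
    qed
    then show ?thesis using hJ by (simp add: psd_iff)
  qed
  have JT_eq: "transpose J = mconj J" by (rule herm_transpose[OF hJ])
  have JT: "psd (transpose J)" unfolding JT_eq by (rule psd_mconj[OF J])
  have hJT: "hermitian_mat (transpose J)" using JT by (rule psd_herm)
  have Areal: "cnj (A $ i $ j) = A $ i $ j" for i j
    unfolding Aent trace_herm4[OF hS hX hX] by (rule trace_sym4)
  have hA: "hermitian_mat A"
    unfolding hermitian_mat_def adjoint_mat_def vec_eq_iff
    by (simp add: Aent trace_herm4[OF hS hX hX])
  have Apsd: "psd A"
  proof -
    have "0 \<le> Re (cinner v (A *v v))" for v
    proof -
      have "trace (S ** lcv v ** S ** adjoint_mat (lcv v)) = trace ((R ** lcv v ** R) ** adjoint_mat (R ** lcv v ** R))"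
        using trace_mul_sym[of "R ** lcv v ** R ** R ** adjoint_mat (lcv v)" R]
        by (simp add: RR[symmetric] adjoint_mult hR' matrix_mul_assoc)
      then show ?thesis unfolding Aqf using trace_gram by simp
    qed
    then show ?thesis using hA by (simp add: psd_iff)
  qed
  have realA: "real_mat A"
    unfolding real_mat_def
  proof (intro allI)
    fix i j
    show "Im (A $ i $ j) = 0" using arg_cong[OF Areal[of i j], of Im] by simp
  qed
  have block: "psd (block2 J A A (transpose J))"
    unfolding psd_block_iff[OF hJ hJT hA]
  proof (intro allI)
    fix u w
    have "F4 J A A (transpose J) u w = trace ((S ** lcv u + lcv w ** S) ** adjoint_mat (S ** lcv u + lcv w ** S))"
      unfolding F4_def Jqf Aqf JTqf SS[symmetric] by (rule block_trace[OF hS'])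
    then show "0 \<le> Re (F4 J A A (transpose J) u w)" using trace_gram by simp
  qed
  have gm: "\<forall>Y. psd Y \<and> psd (block2 J Y Y (transpose J)) \<longrightarrow> loewner_le Y (J # transpose J)"
    using geo_mean_prop[OF J JT] by blast
  have "loewner_le A (J # transpose J)" using gm Apsd block by blast
  then show ?thesis using realA gm_real[OF J] by blast
qed

end
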